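(* Let $H$ be a digraph with at least two vertices and $r\in V(H)$ such that every vertex of $H$ is reachable from $r$, and let $B_r$ be the diblock of $r$ in $H$. Then for every pair of distinct vertices $x,y\in B_r$ there exist a directed $r$–$x$ path $P_x$ and a directed $r$–$y$ path $P_y$ such that $V(P_x)\cap V(P_y)=\{r\}$.
   Context: Digraphs are finite and without loops; paths are directed. A vertex $v$ is bi-reachable from $r$ if there are two internally vertex-disjoint directed paths from $r$ to $v$. For a digraph $H$ with at least two vertices and $r\in V(H)$ such that every vertex of $H$ is reachable from $r$, the diblock $B_r$ of $r$ in $H$ is the set of all vertices bi-reachable from $r$, together with $r$ and all out-neighbours of $r$. *)

theory Defs
  imports Main
begin

definition loopless_digraph :: "'a set \<Rightarrow> ('a \<times> 'a) set \<Rightarrow> bool" where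
  "loopless_digraph V E \<longleftrightarrow> finite V \<and> E \<subseteq> V \<times> V \<and> (\<forall>x. (x, x) \<notin> E)"

definition dpath :: "'a set \<Rightarrow> ('a \<times> 'a) set \<Rightarrow> 'a list \<Rightarrow> bool" where
  "dpath V E p \<longleftrightarrow> p \<noteq> [] \<and> set p \<subseteq> V \<and> distinct p \<and>
     (\<forall>i. Suc i < length p \<longrightarrow> (p ! i, p ! Suc i) \<in> E)"

definition dpath_from_to :: "'a set \<Rightarrow> ('a \<times> 'a) set \<Rightarrow> 'a \<Rightarrow> 'a \<Rightarrow> 'a list \<Rightarrow> bool" where
  "dpath_from_to V E u v p \<longleftrightarrow> dpath V E p \<and> hd p = u \<and> last p = v"

definition reachable :: "'a set \<Rightarrow> ('a \<times> 'a) set \<Rightarrow> 'a \<Rightarrow> 'a \<Rightarrow> bool" where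
  "reachable V E u v \<longleftrightarrow> (\<exists>p. dpath_from_to V E u v p)"

definition bireachable :: "'a set \<Rightarrow> ('a \<times> 'a) set \<Rightarrow> 'a \<Rightarrow> 'a \<Rightarrow> bool" where
  "bireachable V E r v \<longleftrightarrow> (\<exists>P Q. P \<noteq> Q \<and> dpath_from_to V E r v P \<and>
      dpath_from_to V E r v Q \<and> set P \<inter> set Q = {r, v})"

definition diblock :: "'a set \<Rightarrow> ('a \<times> 'a) set \<Rightarrow> 'a \<Rightarrow> 'a set" where
  "diblock V E r = {v \<in> V. bireachable V E r v} \<union> {r} \<union> {v. (r, v) \<in> E}"

end

theory Submission
  imports Defs
begin

lemma dpath_alt:
  "dpath V E p \<longleftrightarrow> p \<noteq> [] \<and> set p \<subseteq> V \<and> distinct p \<and> successively (\<lambda>a b. (a,b) \<in> E) p"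
  unfolding dpath_def successively_conv_nth by simp

lemma dpath_prefix:
  assumes "dpath_from_to V E u v (a @ w # b)"
  shows "dpath_from_to V E u w (a @ [w])"
  using assms unfolding dpath_from_to_def dpath_alt
  by (auto simp: successively_append_iff hd_append split: if_splits)

lemma dpath_suffix:
  assumes "dpath_from_to V E u v (a @ w # b)"
  shows "dpath_from_to V E w v (w # b)"
  using assms unfolding dpath_from_to_def dpath_alt
  by (auto simp: successively_append_iff)

lemma dpath_concat:
  assumes "dpath_from_to V E u w (a @ [w])" "dpath_from_to V E w v (w # d)"
    "set a \<inter> set (w # d) = {}"
  shows "dpath_from_to V E u v (a @ w # d)"
proof -
  have "a @ w # d = (a @ [w]) @ d" by simp
  then show ?thesis using assms unfolding dpath_from_to_def dpath_alt
    by (auto simp: successively_append_iff successively_Cons hd_append split: if_splits)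
qed

lemma last_notin_prefix:
  assumes "distinct (a @ w # b)"
  shows "last (a @ w # b) \<notin> set a"
proof -
  have "last (a @ w # b) \<in> set (w # b)" by (simp add: last_in_set)
  then show ?thesis using assms by auto
qed

lemma last_split:
  "\<exists>c w d. xs = c @ w # d \<and> w \<in> S \<and> set d \<inter> S = {}" if "set xs \<inter> S \<noteq> {}"
  using that
proof (induction xs)
  case Nil then show ?case by simp
next
  case (Cons z zs)
  show ?case
  proof (cases "set zs \<inter> S = {}")
    case True
    then have "z \<in> S" using Cons.prems by auto
    then show ?thesis using True by (intro exI[of _ "[]"] exI[of _ z] exI[of _ zs]) auto
  next
    case False
    then obtain c w d where "zs = c @ w # d" "w \<in> S" "set d \<inter> S = {}" using Cons.IH by blast
    then show ?thesis by (intro exI[of _ "z # c"] exI[of _ w] exI[of _ d]) auto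
  qed
qed

lemma hd_in: "dpath_from_to V E u v p \<Longrightarrow> u \<in> set p"
  unfolding dpath_from_to_def dpath_def by auto

lemma last_in: "dpath_from_to V E u v p \<Longrightarrow> v \<in> set p"
  unfolding dpath_from_to_def dpath_def by auto

lemma core_one:
  assumes P1: "dpath_from_to V E r x P1" and P2: "dpath_from_to V E r x P2"
    and I: "set P1 \<inter> set P2 \<subseteq> {r, x}"
    and w: "w \<in> set P1" "w \<noteq> x"
    and T: "dpath_from_to V E w y (w # d)" and dS: "set d \<inter> (set P1 \<union> set P2) = {}"
  shows "\<exists>Px Py. dpath_from_to V E r x Px \<and> dpath_from_to V E r y Py \<and>
           set Px \<inter> set Py = {r}"
proof -
  obtain a b where ab: "P1 = a @ w # b" using w split_list by metis
  have pre: "dpath_from_to V E r w (a @ [w])" using P1 ab dpath_prefix by metis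
  have dist: "distinct P1" using P1 unfolding dpath_from_to_def dpath_def by auto
  have "x \<notin> set a" using last_notin_prefix[of a w b] dist ab P1
    unfolding dpath_from_to_def by auto
  hence xa: "x \<notin> set (a @ [w])" using w by auto
  have "set a \<inter> set (w # d) = {}"
    using dist ab dS by auto
  hence Py: "dpath_from_to V E r y (a @ w # d)" using dpath_concat pre T by metis
  have "set P2 \<inter> set (a @ w # d) = {r}"
  proof -
    have "set (a @ [w]) \<subseteq> set P1" using ab by auto
    hence "set P2 \<inter> set (a @ [w]) \<subseteq> {r}" using I xa by auto
    moreover have "set P2 \<inter> set d = {}" using dS by auto
    moreover have "r \<in> set P2" "r \<in> set (a @ w # d)" using hd_in P2 Py by metis+
    ultimately show ?thesis by auto
  qed
  then show ?thesis using P2 Py by blast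
qed

lemma core:
  assumes P1: "dpath_from_to V E r x P1" and P2: "dpath_from_to V E r x P2"
    and I: "set P1 \<inter> set P2 \<subseteq> {r, x}"
    and R: "dpath_from_to V E r y R" and xR: "x \<notin> set R" and xy: "x \<noteq> y"
  shows "\<exists>Px Py. dpath_from_to V E r x Px \<and> dpath_from_to V E r y Py \<and>
           set Px \<inter> set Py = {r}"
proof (cases "y \<in> set P1 \<union> set P2")
  case True
  have gen: "\<exists>Px Py. dpath_from_to V E r x Px \<and> dpath_from_to V E r y Py \<and>
           set Px \<inter> set Py = {r}"
    if Q1: "dpath_from_to V E r x Q1" and Q2: "dpath_from_to V E r x Q2"
      and J: "set Q1 \<inter> set Q2 \<subseteq> {r, x}" and yQ: "y \<in> set Q1" for Q1 Q2
  proof -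
    obtain a b where ab: "Q1 = a @ y # b" using yQ split_list by metis
    have pre: "dpath_from_to V E r y (a @ [y])" using Q1 ab dpath_prefix by metis
    have dist: "distinct Q1" using Q1 unfolding dpath_from_to_def dpath_def by auto
    have "x \<notin> set a" using last_notin_prefix[of a y b] dist ab Q1
      unfolding dpath_from_to_def by auto
    hence xa: "x \<notin> set (a @ [y])" using xy by auto
    have "set (a @ [y]) \<subseteq> set Q1" using ab by auto
    hence "set Q2 \<inter> set (a @ [y]) \<subseteq> {r}" using J xa by auto
    moreover have "r \<in> set Q2" "r \<in> set (a @ [y])" using hd_in Q2 pre by metis+
    ultimately have "set Q2 \<inter> set (a @ [y]) = {r}" by auto
    then show ?thesis using Q2 pre by blast
  qed
  show ?thesis
  proof (cases "y \<in> set P1")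
    case True then show ?thesis using gen[OF P1 P2 I] by blast
  next
    case False
    then have "y \<in> set P2" using \<open>y \<in> set P1 \<union> set P2\<close> by blast
    then show ?thesis using gen[OF P2 P1] I by blast
  qed
next
  case False
  have "r \<in> set R \<inter> (set P1 \<union> set P2)" using hd_in[OF R] hd_in[OF P1] by blast
  then obtain c w d where cwd: "R = c @ w # d" "w \<in> set P1 \<union> set P2"
      "set d \<inter> (set P1 \<union> set P2) = {}"
    using last_split[of R "set P1 \<union> set P2"] by blast
  have T: "dpath_from_to V E w y (w # d)" using R cwd dpath_suffix by metis
  have wx: "w \<noteq> x" using xR cwd by auto
  show ?thesis
  proof (cases "w \<in> set P1")
    case True then show ?thesis using core_one[OF P1 P2 I True wx T cwd(3)] by blast
  next
    case False
    hence "w \<in> set P2" using cwd by blast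
    moreover have "set P2 \<inter> set P1 \<subseteq> {r, x}" using I by blast
    moreover have "set d \<inter> (set P2 \<union> set P1) = {}" using cwd by blast
    ultimately show ?thesis using core_one[OF P2 P1 _ _ wx T] by blast
  qed
qed

lemma edge_path:
  assumes "loopless_digraph V E" "(r, v) \<in> E"
  shows "dpath_from_to V E r v [r, v]"
  using assms unfolding loopless_digraph_def dpath_from_to_def dpath_def
  by (auto simp: less_Suc_eq)

theorem lemma5:
  fixes V :: "'a set" and E :: "('a \<times> 'a) set" and r x y :: 'a
  assumes "loopless_digraph V E"
    and "card V \<ge> 2"
    and "r \<in> V"
    and "\<forall>v\<in>V. reachable V E r v"
    and "x \<in> diblock V E r" and "y \<in> diblock V E r" and "x \<noteq> y"
  shows "\<exists>Px Py. dpath_from_to V E r x Px \<and> dpath_from_to V E r y Py \<and>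
           set Px \<inter> set Py = {r}"
proof -
  have EV: "E \<subseteq> V \<times> V" using assms(1) unfolding loopless_digraph_def by auto
  have xV: "x \<in> V" and yV: "y \<in> V"
    using assms(3,5,6) EV unfolding diblock_def by auto
  have triv: "dpath_from_to V E r r [r]"
    using assms(3) unfolding dpath_from_to_def dpath_def by auto
  show ?thesis
  proof (cases "x = r")
    case True
    obtain Py where Py: "dpath_from_to V E r y Py" using assms(4) yV unfolding reachable_def by blast
    then have "set [r] \<inter> set Py = {r}" using hd_in by fastforce
    then show ?thesis using triv Py True by blast
  next
    case xr: False
    show ?thesis
    proof (cases "y = r")
      case True
      obtain Px where Px: "dpath_from_to V E r x Px" using assms(4) xV unfolding reachable_def by blast
      then have "set Px \<inter> set [r] = {r}" using hd_in by fastforce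
      then show ?thesis using triv Px True by blast
    next
      case yr: False
      obtain P1 P2 where P: "dpath_from_to V E r x P1" "dpath_from_to V E r x P2"
        "set P1 \<inter> set P2 \<subseteq> {r, x}"
      proof (cases "(r, x) \<in> E")
        case True
        then show ?thesis using that edge_path[OF assms(1) True] by auto
      next
        case False
        then have "bireachable V E r x" using assms(5) xr unfolding diblock_def by auto
        then show ?thesis using that unfolding bireachable_def by blast
      qed
      obtain R where R: "dpath_from_to V E r y R" "x \<notin> set R"
      proof (cases "(r, y) \<in> E")
        case True
        then show ?thesis using that edge_path[OF assms(1) True] xr assms(7) by auto
      next
        case False
        then have "bireachable V E r y" using assms(6) yr unfolding diblock_def by auto
        then obtain Q1 Q2 where "dpath_from_to V E r y Q1" "dpath_from_to V E r y Q2"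
          "set Q1 \<inter> set Q2 = {r, y}" unfolding bireachable_def by blast
        then show ?thesis using that xr assms(7) by blast
      qed
      show ?thesis using core[OF P R assms(7)] .
    qed
  qed
qed

end
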